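(* Let $\mathcal{H}$ and $\mathcal{K}$ be finite-dimensional complex Hilbert spaces and let $\Psi,\Xi: B(\mathcal{H})\to B(\mathcal{K})$ be Hermitian-preserving trace-preserving linear maps. Suppose there are finite, pairwise disjoint index sets $K,J,\mathcal{I},L$ with $|K|=|L|=|\mathcal{I}|=|J|$ and linear operators $A_k,B_j,C_i,D_l:\mathcal{H}\to\mathcal{K}$ ($k\in K$, $j\in J$, $i\in\mathcal{I}$, $l\in L$) such that for all $X\in B(\mathcal{H})$ $$\Psi(X)=\sum_{k\in K}A_kXA_k^\dagger-\sum_{j\in J}B_jXB_j^\dagger,\qquad \Xi(X)=\sum_{i\in\mathcal{I}}C_iXC_i^\dagger-\sum_{l\in L}D_lXD_l^\dagger.$$ Then $\Psi=\Xi$ if and only if there exists a unitary matrix $U$ with rows indexed by $K\cup L$ and columns indexed by $\mathcal{I}\cup J$ such that $$A_k=\sum_{i\in\mathcal{I}}U(k,i)C_i+\sum_{j\in J}U(k,j)B_j\ \ (k\in K),\qquad D_l=\sum_{i\in\mathcal{I}}U(l,i)C_i+\sum_{j\in J}U(l,j)B_j\ \ (l\in L).$$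
   Context: $B(\mathcal{H})$ denotes all linear operators on $\mathcal{H}$. A map is Hermitian-preserving if $\Psi(X^\dagger)=\Psi(X)^\dagger$ and trace-preserving if $\operatorname{Tr}\Psi(X)=\operatorname{Tr}X$. *)

theory Defs
  imports "HOL-Analysis.Analysis"
begin

text \<open>Finite-dimensional complex Hilbert spaces H = C^'h, K = C^'k (index types finite).
  Linear operators H -> K are matrices complex^'h^'k (rows indexed by 'k).
  B(H) = complex^'h^'h.\<close>

definition adj :: "complex^'n^'m \<Rightarrow> complex^'m^'n" where
  "adj A = (\<chi> i j. cnj (A $ j $ i))"

definition cscale :: "complex \<Rightarrow> complex^'n^'m \<Rightarrow> complex^'n^'m" where
  "cscale c A = (\<chi> i j. c * A $ i $ j)"

definition complex_linear_map :: "(complex^'h^'h \<Rightarrow> complex^'k^'k) \<Rightarrow> bool" where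
  "complex_linear_map \<Psi> \<longleftrightarrow>
     (\<forall>X Y. \<Psi> (X + Y) = \<Psi> X + \<Psi> Y) \<and> (\<forall>c X. \<Psi> (cscale c X) = cscale c (\<Psi> X))"

definition hermitian_preserving :: "(complex^'h^'h \<Rightarrow> complex^'k^'k) \<Rightarrow> bool" where
  "hermitian_preserving \<Psi> \<longleftrightarrow> (\<forall>X. \<Psi> (adj X) = adj (\<Psi> X))"

definition trace_preserving :: "(complex^'h^'h \<Rightarrow> complex^'k^'k) \<Rightarrow> bool" where
  "trace_preserving \<Psi> \<longleftrightarrow> (\<forall>X. trace (\<Psi> X) = trace X)"

definition unitary_on :: "'a set \<Rightarrow> 'a set \<Rightarrow> ('a \<Rightarrow> 'a \<Rightarrow> complex) \<Rightarrow> bool" where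
  "unitary_on R C U \<longleftrightarrow>
     (\<forall>r\<in>R. \<forall>r'\<in>R. (\<Sum>c\<in>C. U r c * cnj (U r' c)) = (if r = r' then 1 else 0)) \<and>
     (\<forall>c\<in>C. \<forall>c'\<in>C. (\<Sum>r\<in>R. cnj (U r c) * U r c') = (if c = c' then 1 else 0))"

end

theory Submission
  imports Defs
begin

definition cip :: "'a set \<Rightarrow> ('a \<Rightarrow> complex) \<Rightarrow> ('a \<Rightarrow> complex) \<Rightarrow> complex" where
  "cip S v w = (\<Sum>i\<in>S. v i * cnj (w i))"

definition capp :: "'b set \<Rightarrow> ('a \<Rightarrow> 'b \<Rightarrow> complex) \<Rightarrow> ('b \<Rightarrow> complex) \<Rightarrow> 'a \<Rightarrow> complex" where
  "capp C U v = (\<lambda>r. \<Sum>c\<in>C. U r c * v c)"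

definition cmm :: "'b set \<Rightarrow> ('a \<Rightarrow> 'b \<Rightarrow> complex) \<Rightarrow> ('b \<Rightarrow> 'c \<Rightarrow> complex) \<Rightarrow> 'a \<Rightarrow> 'c \<Rightarrow> complex" where
  "cmm S P Q = (\<lambda>r c. \<Sum>s\<in>S. P r s * Q s c)"

lemma cip_cong: "(\<And>r. r\<in>S \<Longrightarrow> v r = v' r) \<Longrightarrow> (\<And>r. r\<in>S \<Longrightarrow> w r = w' r) \<Longrightarrow> cip S v w = cip S v' w'"
  by (simp add: cip_def)

lemma cip_diff2: "cip S v (\<lambda>r. w r - w' r) = cip S v w - cip S v w'"
  by (simp add: cip_def sum_subtractf right_diff_distrib)

lemma cip_diff1: "cip S (\<lambda>r. w r - w' r) v = cip S w v - cip S w' v"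
  by (simp add: cip_def sum_subtractf left_diff_distrib)

lemma cip_cnj: "cnj (cip S v w) = cip S w v"
  by (simp add: cip_def mult.commute)

lemma cip_self: "cip S v v = of_real (\<Sum>r\<in>S. (cmod (v r))\<^sup>2)"
  by (simp only: cip_def of_real_sum complex_norm_square)

lemma cip_self_zero: assumes "finite S" "cip S v v = 0" "r \<in> S" shows "v r = 0"
proof -
  have "of_real (\<Sum>r\<in>S. (cmod (v r))\<^sup>2) = (0::complex)" using assms(2) cip_self by metis
  then have "(\<Sum>r\<in>S. (cmod (v r))\<^sup>2) = 0" by (simp only: of_real_eq_0_iff)
  then have "\<forall>r\<in>S. (cmod (v r))\<^sup>2 = 0" using assms(1) by (subst (asm) sum_nonneg_eq_0_iff) auto
  then show ?thesis using assms(3) by auto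
qed

lemma unitary_preserves:
  assumes U: "unitary_on R C U" and fin: "finite R" "finite C"
  shows "cip R (capp C U v) (capp C U w) = cip C v w"
proof -
  have d: "(\<Sum>r\<in>R. U r c * cnj (U r c')) = (if c = c' then 1 else 0)" if "c \<in> C" "c' \<in> C" for c c'
  proof -
    have "(\<Sum>r\<in>R. U r c * cnj (U r c')) = cnj (\<Sum>r\<in>R. cnj (U r c) * U r c')"
      by (simp add: mult.commute)
    also have "\<dots> = (if c = c' then 1 else 0)" using U that unfolding unitary_on_def by simp
    finally show ?thesis .
  qed
  have "cip R (capp C U v) (capp C U w) = (\<Sum>r\<in>R. \<Sum>c'\<in>C. \<Sum>c\<in>C. v c * cnj (w c') * (U r c * cnj (U r c')))"
    unfolding cip_def capp_def
    by (simp add: sum_distrib_left sum_distrib_right mult_ac)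
  also have "\<dots> = (\<Sum>c'\<in>C. \<Sum>c\<in>C. v c * cnj (w c') * (\<Sum>r\<in>R. U r c * cnj (U r c')))"
    by (simp add: sum_distrib_left sum.swap[of _ R])
  also have "\<dots> = (\<Sum>c'\<in>C. \<Sum>c\<in>C. if c = c' then v c * cnj (w c) else 0)"
    by (intro sum.cong refl) (simp add: d)
  also have "\<dots> = cip C v w" using fin by (simp add: cip_def)
  finally show ?thesis .
qed

lemma capp_cmm: "capp R (cmm S P Q) v = capp S P (capp R Q v)"
  unfolding capp_def cmm_def
  by (rule ext) (simp add: sum_distrib_left sum_distrib_right mult_ac sum.swap[of _ R])

lemma unitary_cmm:
  assumes P: "unitary_on R R P" and Q: "unitary_on R C Q" and fin: "finite R" "finite C"
  shows "unitary_on R C (cmm R P Q)"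
proof -
  have P1: "\<And>r r'. r\<in>R \<Longrightarrow> r'\<in>R \<Longrightarrow> (\<Sum>c\<in>R. P r c * cnj (P r' c)) = (if r = r' then 1 else 0)"
   and P2: "\<And>r r'. r\<in>R \<Longrightarrow> r'\<in>R \<Longrightarrow> (\<Sum>c\<in>R. cnj (P c r) * P c r') = (if r = r' then 1 else 0)"
    using P unfolding unitary_on_def by auto
  have Q1: "\<And>r r'. r\<in>R \<Longrightarrow> r'\<in>R \<Longrightarrow> (\<Sum>c\<in>C. Q r c * cnj (Q r' c)) = (if r = r' then 1 else 0)"
   and Q2: "\<And>r r'. r\<in>C \<Longrightarrow> r'\<in>C \<Longrightarrow> (\<Sum>c\<in>R. cnj (Q c r) * Q c r') = (if r = r' then 1 else 0)"
    using Q unfolding unitary_on_def by auto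
  have c1: "(\<Sum>c\<in>C. cmm R P Q r c * cnj (cmm R P Q r' c)) = (if r = r' then 1 else 0)" if "r\<in>R" "r'\<in>R" for r r'
  proof -
    have "(\<Sum>c\<in>C. cmm R P Q r c * cnj (cmm R P Q r' c)) = (\<Sum>c\<in>C. \<Sum>t\<in>R. \<Sum>s\<in>R. P r s * cnj (P r' t) * (Q s c * cnj (Q t c)))"
      unfolding cmm_def by (simp add: sum_distrib_left sum_distrib_right mult_ac)
    also have "\<dots> = (\<Sum>t\<in>R. \<Sum>s\<in>R. P r s * cnj (P r' t) * (\<Sum>c\<in>C. Q s c * cnj (Q t c)))"
      by (simp add: sum_distrib_left sum.swap[of _ C])
    also have "\<dots> = (\<Sum>t\<in>R. \<Sum>s\<in>R. if s = t then P r s * cnj (P r' s) else 0)"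
      by (intro sum.cong refl) (simp add: Q1)
    also have "\<dots> = (if r = r' then 1 else 0)" using fin P1 that by simp
    finally show ?thesis .
  qed
  have c2: "(\<Sum>x\<in>R. cnj (cmm R P Q x c) * cmm R P Q x c') = (if c = c' then 1 else 0)" if "c\<in>C" "c'\<in>C" for c c'
  proof -
    have "(\<Sum>x\<in>R. cnj (cmm R P Q x c) * cmm R P Q x c') = (\<Sum>x\<in>R. \<Sum>s\<in>R. \<Sum>t\<in>R. cnj (Q s c) * Q t c' * (cnj (P x s) * P x t))"
      unfolding cmm_def by (simp add: sum_distrib_left sum_distrib_right mult_ac)
    also have "\<dots> = (\<Sum>s\<in>R. \<Sum>x\<in>R. \<Sum>t\<in>R. cnj (Q s c) * Q t c' * (cnj (P x s) * P x t))"
      by (rule sum.swap)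
    also have "\<dots> = (\<Sum>s\<in>R. \<Sum>t\<in>R. \<Sum>x\<in>R. cnj (Q s c) * Q t c' * (cnj (P x s) * P x t))"
      by (rule sum.cong[OF refl], rule sum.swap)
    also have "\<dots> = (\<Sum>s\<in>R. \<Sum>t\<in>R. cnj (Q s c) * Q t c' * (\<Sum>x\<in>R. cnj (P x s) * P x t))"
      by (simp add: sum_distrib_left)
    also have "\<dots> = (\<Sum>s\<in>R. \<Sum>t\<in>R. if s = t then cnj (Q s c) * Q s c' else 0)"
      by (intro sum.cong refl) (simp add: P2)
    also have "\<dots> = (if c = c' then 1 else 0)" using fin Q2 that by simp
    finally show ?thesis .
  qed
  show ?thesis unfolding unitary_on_def using c1 c2 by blast
qed

lemma unitary_exists:
  assumes "finite R" "finite C" "card R = card C"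
  shows "\<exists>U. unitary_on R C U"
proof -
  obtain f where f: "bij_betw f C R" using finite_same_card_bij[OF assms(2,1) assms(3)[symmetric]] by blast
  define U where "U = (\<lambda>r c. if r = f c then (1::complex) else 0)"
  have "(\<Sum>c\<in>C. U r c * cnj (U r' c)) = (if r = r' then 1 else 0)" if "r\<in>R" "r'\<in>R" for r r'
  proof -
    have "r \<in> f ` C" using f that by (simp add: bij_betw_def)
    then obtain c0 where c0: "c0 \<in> C" "f c0 = r" by blast
    have "(\<Sum>c\<in>C. U r c * cnj (U r' c)) = (\<Sum>c\<in>C. if c = c0 then (if r = r' then 1 else 0) else 0)"
      apply (intro sum.cong refl)
      using f c0 unfolding U_def bij_betw_def inj_on_def by auto
    then show ?thesis using c0 assms by simp
  qed
  moreover have "(\<Sum>r\<in>R. cnj (U r c) * U r c') = (if c = c' then 1 else 0)" if "c\<in>C" "c'\<in>C" for c c'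
  proof -
    have "(\<Sum>r\<in>R. cnj (U r c) * U r c') = (\<Sum>r\<in>R. if r = f c then (if c = c' then 1 else 0) else 0)"
      apply (intro sum.cong refl)
      using f that unfolding U_def bij_betw_def inj_on_def by auto
    then show ?thesis using f that assms unfolding bij_betw_def by auto
  qed
  ultimately show ?thesis unfolding unitary_on_def by blast
qed


lemma rank1_unitary:
  assumes fin: "finite R" and a: "a \<noteq> 0" and N: "cip R u u = a + cnj a"
  shows "unitary_on R R (\<lambda>r r'. (if r = r' then 1 else 0) - u r * cnj (u r') / a)"
    (is "unitary_on R R ?P")
proof -
  have ca: "cnj a \<noteq> 0" using a by simp
  have N': "(\<Sum>c\<in>R. u c * cnj (u c)) = a + cnj a" using N by (simp add: cip_def)
  have key: "(if r = r' then 1 else 0) - cnj (u r') * u r / cnj a - u r * cnj (u r') / a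
        + u r * cnj (u r') / (a * cnj a) * (a + cnj a) = (if r = r' then 1 else (0::complex))" for r r'
    using a ca by (simp add: field_simps)
  have c1: "(\<Sum>c\<in>R. ?P r c * cnj (?P r' c)) = (if r = r' then 1 else 0)" if "r \<in> R" "r' \<in> R" for r r'
  proof -
    have "(\<Sum>c\<in>R. ?P r c * cnj (?P r' c)) = (\<Sum>c\<in>R. (if c = r then (if r = r' then 1 else 0) else 0)
        - (if c = r then cnj (u r') * u r / cnj a else 0) - (if c = r' then u r * cnj (u r') / a else 0)
        + u r * cnj (u r') / (a * cnj a) * (u c * cnj (u c)))"
      by (intro sum.cong refl) (auto simp: field_simps a ca)
    also have "\<dots> = (if r = r' then 1 else 0) - cnj (u r') * u r / cnj a - u r * cnj (u r') / a
        + u r * cnj (u r') / (a * cnj a) * (\<Sum>c\<in>R. u c * cnj (u c))"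
      using fin that by (simp add: sum.distrib sum_subtractf sum_distrib_left)
    also have "\<dots> = (if r = r' then 1 else 0)" using key N' by simp
    finally show ?thesis .
  qed
  have c2: "(\<Sum>x\<in>R. cnj (?P x r) * ?P x r') = (if r = r' then 1 else 0)" if "r \<in> R" "r' \<in> R" for r r'
  proof -
    have "(\<Sum>x\<in>R. cnj (?P x r) * ?P x r') = (\<Sum>x\<in>R. (if x = r then (if r = r' then 1 else 0) else 0)
        - (if x = r then u r * cnj (u r') / a else 0) - (if x = r' then cnj (u r') * u r / cnj a else 0)
        + u r * cnj (u r') / (a * cnj a) * (u x * cnj (u x)))"
      by (intro sum.cong refl) (auto simp: field_simps a ca)
    also have "\<dots> = (if r = r' then 1 else 0) - u r * cnj (u r') / a - cnj (u r') * u r / cnj a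
        + u r * cnj (u r') / (a * cnj a) * (\<Sum>c\<in>R. u c * cnj (u c))"
      using fin that by (simp add: sum.distrib sum_subtractf sum_distrib_left)
    also have "\<dots> = (if r = r' then 1 else 0)" using key[of r r'] N' by (simp add: algebra_simps)
    finally show ?thesis .
  qed
  show ?thesis unfolding unitary_on_def using c1 c2 by blast
qed


lemma gram_unitary:
  fixes \<rho> :: "'z \<Rightarrow> 'a \<Rightarrow> complex" and \<sigma> :: "'z \<Rightarrow> 'a \<Rightarrow> complex"
  assumes fin: "finite R" "finite C" "card R = card C" and Zf: "finite Z"
    and G: "\<And>z z'. cip R (\<rho> z) (\<rho> z') = cip C (\<sigma> z) (\<sigma> z')"
  shows "\<exists>U. unitary_on R C U \<and> (\<forall>z\<in>Z. \<forall>r\<in>R. \<rho> z r = capp C U (\<sigma> z) r)"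
using Zf
proof (induction Z rule: finite_induct)
  case empty then show ?case using unitary_exists fin by blast
next
  case (insert z0 Z)
  then obtain U where U: "unitary_on R C U" and hU: "\<forall>z\<in>Z. \<forall>r\<in>R. \<rho> z r = capp C U (\<sigma> z) r"
    by blast
  define s where "s = capp C U (\<sigma> z0)"
  define y where "y = \<rho> z0"
  define u where "u = (\<lambda>r. s r - y r)"
  show ?case
  proof (cases "\<forall>r\<in>R. u r = 0")
    case True
    then have "\<forall>r\<in>R. \<rho> z0 r = capp C U (\<sigma> z0) r" by (simp add: u_def s_def y_def)
    then show ?thesis using U hU by blast
  next
    case False
    then obtain r0 where r0: "r0 \<in> R" "u r0 \<noteq> 0" by blast
    define a where "a = cip R s u"
    have ss: "cip R s s = cip R y y"
      using unitary_preserves[OF U fin(1,2)] G unfolding s_def y_def by simp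
    have ca: "cnj a = cip R s s - cip R y s"
      by (simp add: a_def u_def cip_diff2 cip_cnj)
    have Nu: "cip R u u = a + cnj a"
      unfolding ca by (simp add: u_def a_def cip_diff1 cip_diff2 ss)
    have a0: "a \<noteq> 0"
    proof
      assume "a = 0"
      then have "cip R u u = 0" using Nu by simp
      then have "u r0 = 0" using cip_self_zero[OF fin(1) _ r0(1)] by blast
      then show False using r0 by simp
    qed
    define P where "P = (\<lambda>r r'. (if r = r' then 1 else 0) - u r * cnj (u r') / a)"
    have P: "unitary_on R R P" using rank1_unitary[OF fin(1) a0 Nu] unfolding P_def .
    have Papp: "capp R P w r = w r - u r * cip R w u / a" if "r \<in> R" for w r
    proof -
      have "capp R P w r = (\<Sum>r'\<in>R. (if r = r' then w r' else 0) - u r / a * (w r' * cnj (u r')))"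
        unfolding capp_def P_def by (intro sum.cong refl) (simp add: algebra_simps)
      also have "\<dots> = w r - u r / a * cip R w u"
        using fin(1) that by (simp add: sum_subtractf sum_distrib_left cip_def)
      finally show ?thesis by simp
    qed
    have orth: "cip R (\<rho> z) u = 0" if "z \<in> Z" for z
    proof -
      have "cip R (\<rho> z) s = cip R (capp C U (\<sigma> z)) s" using hU that by (intro cip_cong) auto
      also have "\<dots> = cip C (\<sigma> z) (\<sigma> z0)" unfolding s_def by (rule unitary_preserves[OF U fin(1,2)])
      also have "\<dots> = cip R (\<rho> z) y" unfolding y_def by (rule G[symmetric])
      finally show ?thesis unfolding u_def cip_diff2 by simp
    qed
    have "unitary_on R C (cmm R P U)" by (rule unitary_cmm[OF P U fin(1,2)])
    moreover have "\<forall>z\<in>insert z0 Z. \<forall>r\<in>R. \<rho> z r = capp C (cmm R P U) (\<sigma> z) r"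
    proof (intro ballI)
      fix z r assume z: "z \<in> insert z0 Z" and r: "r \<in> R"
      have e: "capp C (cmm R P U) (\<sigma> z) r = capp R P (capp C U (\<sigma> z)) r" by (simp add: capp_cmm)
      show "\<rho> z r = capp C (cmm R P U) (\<sigma> z) r"
      proof (cases "z = z0")
        case True
        have "capp R P s r = s r - u r * a / a" using Papp[OF r] a_def by simp
        also have "\<dots> = y r" using a0 by (simp add: u_def)
        finally show ?thesis using e True by (simp add: s_def y_def)
      next
        case False
        then have zZ: "z \<in> Z" using z by simp
        have "cip R (capp C U (\<sigma> z)) u = cip R (\<rho> z) u" using hU zZ by (intro cip_cong) auto
        then show ?thesis using e Papp[OF r, of "capp C U (\<sigma> z)"] orth[OF zZ] hU zZ r by simp
      qed
    qed
    ultimately show ?thesis by blast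
  qed
qed


lemma entry_formula:
  fixes F :: "'a \<Rightarrow> complex^'h::finite^'k::finite" and X :: "complex^'h^'h"
  shows "(\<Sum>r\<in>S. F r ** X ** adj (F r)) $ x $ y =
    (\<Sum>p\<in>UNIV. \<Sum>q\<in>UNIV. X$p$q * cip S (\<lambda>r. F r $ x $ p) (\<lambda>r. F r $ y $ q))"
proof -
  have "(\<Sum>r\<in>S. F r ** X ** adj (F r)) $ x $ y = (\<Sum>r\<in>S. \<Sum>q\<in>UNIV. \<Sum>p\<in>UNIV. X$p$q * (F r $ x $ p * cnj (F r $ y $ q)))"
    unfolding matrix_matrix_mult_def adj_def by (simp add: sum_distrib_right sum_distrib_left mult_ac)
  also have "\<dots> = (\<Sum>q\<in>UNIV. \<Sum>r\<in>S. \<Sum>p\<in>UNIV. X$p$q * (F r $ x $ p * cnj (F r $ y $ q)))"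
    by (rule sum.swap)
  also have "\<dots> = (\<Sum>q\<in>UNIV. \<Sum>p\<in>UNIV. \<Sum>r\<in>S. X$p$q * (F r $ x $ p * cnj (F r $ y $ q)))"
    by (rule sum.cong[OF refl], rule sum.swap)
  also have "\<dots> = (\<Sum>p\<in>UNIV. \<Sum>q\<in>UNIV. \<Sum>r\<in>S. X$p$q * (F r $ x $ p * cnj (F r $ y $ q)))"
    by (rule sum.swap)
  also have "\<dots> = (\<Sum>p\<in>UNIV. \<Sum>q\<in>UNIV. X$p$q * cip S (\<lambda>r. F r $ x $ p) (\<lambda>r. F r $ y $ q))"
    by (simp add: cip_def sum_distrib_left)
  finally show ?thesis .
qed

lemma sums_eq_iff_gram:
  fixes F G :: "'a \<Rightarrow> complex^'h::finite^'k::finite"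
  shows "(\<forall>X::complex^'h^'h. (\<Sum>r\<in>R. F r ** X ** adj (F r)) = (\<Sum>c\<in>C. G c ** X ** adj (G c))) \<longleftrightarrow>
    (\<forall>z z'. cip R (\<lambda>r. F r $ fst z $ snd z) (\<lambda>r. F r $ fst z' $ snd z') =
            cip C (\<lambda>r. G r $ fst z $ snd z) (\<lambda>r. G r $ fst z' $ snd z'))"
proof
  assume H: "\<forall>X::complex^'h^'h. (\<Sum>r\<in>R. F r ** X ** adj (F r)) = (\<Sum>c\<in>C. G c ** X ** adj (G c))"
  show "\<forall>z z'. cip R (\<lambda>r. F r $ fst z $ snd z) (\<lambda>r. F r $ fst z' $ snd z') =
            cip C (\<lambda>r. G r $ fst z $ snd z) (\<lambda>r. G r $ fst z' $ snd z')"
  proof (intro allI)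
    fix z z' :: "'k \<times> 'h"
    obtain x p where z: "z = (x, p)" by fastforce
    obtain y q where z': "z' = (y, q)" by fastforce
    have aux: "(\<Sum>p'\<in>UNIV. \<Sum>q'\<in>UNIV. if p' = p \<and> q' = q then c else 0) = c" for c :: complex
    proof -
      have "(\<Sum>p'\<in>UNIV. \<Sum>q'\<in>UNIV. if p' = p \<and> q' = q then c else 0) =
            (\<Sum>p'\<in>UNIV. if p' = p then (\<Sum>q'\<in>UNIV. if q' = q then c else 0) else 0)"
        by (intro sum.cong refl) auto
      then show ?thesis by simp
    qed
    define X :: "complex^'h^'h" where "X = (\<chi> i j. if i = p \<and> j = q then 1 else 0)"
    have "(\<Sum>r\<in>R. F r ** X ** adj (F r)) $ x $ y = (\<Sum>c\<in>C. G c ** X ** adj (G c)) $ x $ y"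
      using H by simp
    then have "(\<Sum>p'\<in>UNIV. \<Sum>q'\<in>UNIV. X$p'$q' * cip R (\<lambda>r. F r $ x $ p') (\<lambda>r. F r $ y $ q')) =
               (\<Sum>p'\<in>UNIV. \<Sum>q'\<in>UNIV. X$p'$q' * cip C (\<lambda>r. G r $ x $ p') (\<lambda>r. G r $ y $ q'))"
      by (simp only: entry_formula)
    then show "cip R (\<lambda>r. F r $ fst z $ snd z) (\<lambda>r. F r $ fst z' $ snd z') =
            cip C (\<lambda>r. G r $ fst z $ snd z) (\<lambda>r. G r $ fst z' $ snd z')"
      unfolding X_def z z' by (simp add: if_distrib[of "\<lambda>t. t * _"] aux cong: if_cong)
  qed
next
  assume H: "\<forall>z z'. cip R (\<lambda>r. F r $ fst z $ snd z) (\<lambda>r. F r $ fst z' $ snd z') =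
            cip C (\<lambda>r. G r $ fst z $ snd z) (\<lambda>r. G r $ fst z' $ snd z')"
  show "\<forall>X::complex^'h^'h. (\<Sum>r\<in>R. F r ** X ** adj (F r)) = (\<Sum>c\<in>C. G c ** X ** adj (G c))"
  proof (intro allI)
    fix X :: "complex^'h^'h"
    have "cip R (\<lambda>r. F r $ x $ p) (\<lambda>r. F r $ y $ q) = cip C (\<lambda>r. G r $ x $ p) (\<lambda>r. G r $ y $ q)" for x y p q
      using H[rule_format, of "(x,p)" "(y,q)"] by simp
    then show "(\<Sum>r\<in>R. F r ** X ** adj (F r)) = (\<Sum>c\<in>C. G c ** X ** adj (G c))"
      by (simp add: vec_eq_iff entry_formula del: sum_component)
  qed
qed


lemma diff_eq_diff_iff: "(a::'x::ab_group_add) - b = c - d \<longleftrightarrow> a + d = c + b"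
  by (metis add_diff_cancel_right diff_add_cancel diff_diff_eq2 diff_eq_eq add.commute)

theorem mainTheorem11:
  fixes \<Psi> \<Xi> :: "complex^'h::finite^'h \<Rightarrow> complex^'k::finite^'k"
    and K J I L :: "'a set"
    and A B C D :: "'a \<Rightarrow> complex^'h^'k"
  assumes "complex_linear_map \<Psi>" "hermitian_preserving \<Psi>" "trace_preserving \<Psi>"
    and "complex_linear_map \<Xi>" "hermitian_preserving \<Xi>" "trace_preserving \<Xi>"
    and "finite K" "finite J" "finite I" "finite L"
    and "K \<inter> J = {}" "K \<inter> I = {}" "K \<inter> L = {}" "J \<inter> I = {}" "J \<inter> L = {}" "I \<inter> L = {}"
    and "card K = card L" "card L = card I" "card I = card J"
    and "\<And>X. \<Psi> X = (\<Sum>k\<in>K. A k ** X ** adj (A k)) - (\<Sum>j\<in>J. B j ** X ** adj (B j))"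
    and "\<And>X. \<Xi> X = (\<Sum>i\<in>I. C i ** X ** adj (C i)) - (\<Sum>l\<in>L. D l ** X ** adj (D l))"
  shows "\<Psi> = \<Xi> \<longleftrightarrow>
    (\<exists>U. unitary_on (K \<union> L) (I \<union> J) U \<and>
       (\<forall>k\<in>K. A k = (\<Sum>i\<in>I. cscale (U k i) (C i)) + (\<Sum>j\<in>J. cscale (U k j) (B j))) \<and>
       (\<forall>l\<in>L. D l = (\<Sum>i\<in>I. cscale (U l i) (C i)) + (\<Sum>j\<in>J. cscale (U l j) (B j))))"
proof -
  note fin = assms(7-10) and disj = assms(11-16) and cards = assms(17-19)
  have IJ: "I \<inter> J = {}" using disj by blast
  define M where "M = (\<lambda>r. if r \<in> K then A r else D r)"
  define N where "N = (\<lambda>c. if c \<in> I then C c else B c)"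
  define R where "R = K \<union> L"
  define Cs where "Cs = I \<union> J"
  have finR: "finite R" and finC: "finite Cs" using fin by (auto simp: R_def Cs_def)
  have cardRC: "card R = card Cs"
  proof -
    have "I \<inter> J = {}" using disj by blast
    then show ?thesis unfolding R_def Cs_def using fin disj cards by (simp add: card_Un_disjoint)
  qed
  have sumM: "(\<Sum>r\<in>R. M r ** X ** adj (M r)) = (\<Sum>k\<in>K. A k ** X ** adj (A k)) + (\<Sum>l\<in>L. D l ** X ** adj (D l))" for X
  proof -
    have "(\<Sum>r\<in>R. M r ** X ** adj (M r)) = (\<Sum>r\<in>K. M r ** X ** adj (M r)) + (\<Sum>r\<in>L. M r ** X ** adj (M r))"
      unfolding R_def using fin disj by (simp add: sum.union_disjoint)
    also have "\<dots> = (\<Sum>k\<in>K. A k ** X ** adj (A k)) + (\<Sum>l\<in>L. D l ** X ** adj (D l))"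
      using disj by (intro arg_cong2[where f="(+)"] sum.cong refl) (auto simp: M_def)
    finally show ?thesis .
  qed
  have sumN: "(\<Sum>c\<in>Cs. N c ** X ** adj (N c)) = (\<Sum>i\<in>I. C i ** X ** adj (C i)) + (\<Sum>j\<in>J. B j ** X ** adj (B j))" for X
  proof -
    have "(\<Sum>c\<in>Cs. N c ** X ** adj (N c)) = (\<Sum>c\<in>I. N c ** X ** adj (N c)) + (\<Sum>c\<in>J. N c ** X ** adj (N c))"
      unfolding Cs_def using fin IJ by (simp add: sum.union_disjoint)
    also have "\<dots> = (\<Sum>i\<in>I. C i ** X ** adj (C i)) + (\<Sum>j\<in>J. B j ** X ** adj (B j))"
      using disj by (intro arg_cong2[where f="(+)"] sum.cong refl) (auto simp: N_def)
    finally show ?thesis .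
  qed
  have eq1: "\<Psi> = \<Xi> \<longleftrightarrow> (\<forall>X. (\<Sum>r\<in>R. M r ** X ** adj (M r)) = (\<Sum>c\<in>Cs. N c ** X ** adj (N c)))"
    unfolding sumM sumN fun_eq_iff assms(20,21) diff_eq_diff_iff by simp
  define \<rho> where "\<rho> = (\<lambda>z r. M r $ fst z $ snd z)"
  define \<sigma> where "\<sigma> = (\<lambda>z r. N r $ fst z $ snd z)"
  have eq2: "(\<forall>X. (\<Sum>r\<in>R. M r ** X ** adj (M r)) = (\<Sum>c\<in>Cs. N c ** X ** adj (N c))) \<longleftrightarrow>
     (\<forall>z z'. cip R (\<rho> z) (\<rho> z') = cip Cs (\<sigma> z) (\<sigma> z'))"
    unfolding \<rho>_def \<sigma>_def by (rule sums_eq_iff_gram)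
  have eq3: "(\<forall>z z'. cip R (\<rho> z) (\<rho> z') = cip Cs (\<sigma> z) (\<sigma> z')) \<longleftrightarrow>
     (\<exists>U. unitary_on R Cs U \<and> (\<forall>z\<in>(UNIV::('k\<times>'h) set). \<forall>r\<in>R. \<rho> z r = capp Cs U (\<sigma> z) r))"
  proof
    assume "\<forall>z z'. cip R (\<rho> z) (\<rho> z') = cip Cs (\<sigma> z) (\<sigma> z')"
    then show "\<exists>U. unitary_on R Cs U \<and> (\<forall>z\<in>(UNIV::('k\<times>'h) set). \<forall>r\<in>R. \<rho> z r = capp Cs U (\<sigma> z) r)"
      using gram_unitary[OF finR finC cardRC finite_class.finite_UNIV] by blast
  next
    assume "\<exists>U. unitary_on R Cs U \<and> (\<forall>z\<in>(UNIV::('k\<times>'h) set). \<forall>r\<in>R. \<rho> z r = capp Cs U (\<sigma> z) r)"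
    then obtain U where U: "unitary_on R Cs U" and h: "\<forall>z. \<forall>r\<in>R. \<rho> z r = capp Cs U (\<sigma> z) r" by blast
    show "\<forall>z z'. cip R (\<rho> z) (\<rho> z') = cip Cs (\<sigma> z) (\<sigma> z')"
    proof (intro allI)
      fix z z'
      have "cip R (\<rho> z) (\<rho> z') = cip R (capp Cs U (\<sigma> z)) (capp Cs U (\<sigma> z'))"
        using h by (intro cip_cong) blast+
      also have "\<dots> = cip Cs (\<sigma> z) (\<sigma> z')" by (rule unitary_preserves[OF U finR finC])
      finally show "cip R (\<rho> z) (\<rho> z') = cip Cs (\<sigma> z) (\<sigma> z')" .
    qed
  qed
  have eq4: "(\<forall>z\<in>(UNIV::('k\<times>'h) set). \<forall>r\<in>R. \<rho> z r = capp Cs U (\<sigma> z) r) \<longleftrightarrow>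
     (\<forall>r\<in>R. M r = (\<Sum>i\<in>I. cscale (U r i) (C i)) + (\<Sum>j\<in>J. cscale (U r j) (B j)))" for U
  proof -
    have s: "(\<Sum>i\<in>I. cscale (U r i) (C i)) + (\<Sum>j\<in>J. cscale (U r j) (B j)) = (\<Sum>c\<in>Cs. cscale (U r c) (N c))" for r
    proof -
      have "(\<Sum>c\<in>Cs. cscale (U r c) (N c)) = (\<Sum>c\<in>I. cscale (U r c) (N c)) + (\<Sum>c\<in>J. cscale (U r c) (N c))"
        unfolding Cs_def using fin IJ by (simp add: sum.union_disjoint)
      also have "\<dots> = (\<Sum>i\<in>I. cscale (U r i) (C i)) + (\<Sum>j\<in>J. cscale (U r j) (B j))"
        using disj by (intro arg_cong2[where f="(+)"] sum.cong refl) (auto simp: N_def)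
      finally show ?thesis by simp
    qed
    have c: "(\<Sum>c\<in>Cs. cscale (U r c) (N c)) $ x $ p = capp Cs U (\<sigma> (x, p)) r" for r x p
      by (simp add: capp_def \<sigma>_def cscale_def)
    show ?thesis unfolding s
      by (auto simp: vec_eq_iff c \<rho>_def simp del: sum_component)
  qed
  have eq5: "(\<forall>r\<in>R. M r = (\<Sum>i\<in>I. cscale (U r i) (C i)) + (\<Sum>j\<in>J. cscale (U r j) (B j))) \<longleftrightarrow>
       (\<forall>k\<in>K. A k = (\<Sum>i\<in>I. cscale (U k i) (C i)) + (\<Sum>j\<in>J. cscale (U k j) (B j))) \<and>
       (\<forall>l\<in>L. D l = (\<Sum>i\<in>I. cscale (U l i) (C i)) + (\<Sum>j\<in>J. cscale (U l j) (B j)))" for U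
    using disj unfolding R_def M_def by auto
  have fin1: "\<Psi> = \<Xi> \<longleftrightarrow> (\<exists>U. unitary_on R Cs U \<and>
       (\<forall>r\<in>R. M r = (\<Sum>i\<in>I. cscale (U r i) (C i)) + (\<Sum>j\<in>J. cscale (U r j) (B j))))"
    unfolding eq1 eq2 eq3 eq4 by (rule refl)
  show ?thesis unfolding fin1 eq5 unfolding R_def Cs_def by (rule refl)
qed

end
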